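(* The set of singular points of the collinearity variety $\tilde{C}_P=0$ remains invariant under Euclidean motions, i.e. under maps $(\mathbf{k}'_1,\dots,\mathbf{k}'_6)\mapsto(\mathbf{R}\mathbf{k}'_1+\mathbf{t},\dots,\mathbf{R}\mathbf{k}'_6+\mathbf{t})$ with $\mathbf{R}\in SO(2)$ and $\mathbf{t}\in\mathbb{R}^2$. Moreover, a point of $\tilde{C}_P=0$ is a singular point if and only if $\mathbf{k}'_4=\mathbf{k}'_5=\mathbf{k}'_6$.
   Context: A configuration is $K'=(\mathbf{k}'_1,\dots,\mathbf{k}'_6)$ with $\mathbf{k}'_i=(c_i,d_i)^T\in\mathbb{R}^2$, viewed as a point of $\mathbb{R}^{12}$. The given base has anchor points $(0,0),(x_2,0),(x_3,y_3)$ with real design parameters $x_2\neq0$, $x_3$, $y_3$. Define $C_P=\det\begin{pmatrix}1&1&1\\ c_4&c_5&c_6\\ d_4&d_5&d_6\end{pmatrix}$, $E_B=\|\mathbf{k}'_2-\mathbf{k}'_1\|^2-x_2^2$, $F_1=(c_2-c_1)x_3+(d_1-d_2)y_3+(c_1-c_3)x_2$, $F_2=(d_2-d_1)x_3+(c_2-c_1)y_3+(d_1-d_3)x_2$. The variety $\tilde{C}_P=0$ is the common zero set of $C_P,E_B,F_1,F_2$ in $\mathbb{R}^{12}$ (configurations with collinear platform points whose base is a Euclidean image of the given base). A singular point of $\tilde{C}_P=0$ is a point of it at which the gradients of $C_P,E_B,F_1,F_2$ with respect to $c_1,\dots,c_6,d_1,\dots,d_6$ are linearly dependent. *)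

theory Defs
  imports "HOL-Analysis.Analysis"
begin

text \<open>A configuration K' = (k'_1,...,k'_6), k'_i = (c_i,d_i) in R^2, is an element
  K :: real^2^6 (a point of R^12), with k'_i = K$i, c_i = K$i$1, d_i = K$i$2,
  for the indices i = 1,...,6 of the finite type 6.\<close>

type_synonym config = "real^2^6"

definition cc :: "config \<Rightarrow> 6 \<Rightarrow> real" where "cc K i = K $ i $ 1"
definition dd :: "config \<Rightarrow> 6 \<Rightarrow> real" where "dd K i = K $ i $ 2"

definition C_P :: "config \<Rightarrow> real" where
  "C_P K = det (vector [vector [1, 1, 1],
                         vector [cc K 4, cc K 5, cc K 6],
                         vector [dd K 4, dd K 5, dd K 6]] :: real^3^3)"

definition E_B :: "real \<Rightarrow> config \<Rightarrow> real" where
  "E_B x2 K = (norm (K$2 - K$1))\<^sup>2 - x2\<^sup>2"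

definition F_1 :: "real \<Rightarrow> real \<Rightarrow> real \<Rightarrow> config \<Rightarrow> real" where
  "F_1 x2 x3 y3 K = (cc K 2 - cc K 1) * x3 + (dd K 1 - dd K 2) * y3 + (cc K 1 - cc K 3) * x2"

definition F_2 :: "real \<Rightarrow> real \<Rightarrow> real \<Rightarrow> config \<Rightarrow> real" where
  "F_2 x2 x3 y3 K = (dd K 2 - dd K 1) * x3 + (cc K 2 - cc K 1) * y3 + (dd K 1 - dd K 3) * x2"

definition on_CP_variety :: "real \<Rightarrow> real \<Rightarrow> real \<Rightarrow> config \<Rightarrow> bool" where
  "on_CP_variety x2 x3 y3 K \<longleftrightarrow>
     C_P K = 0 \<and> E_B x2 K = 0 \<and> F_1 x2 x3 y3 K = 0 \<and> F_2 x2 x3 y3 K = 0"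

definition singular_point :: "real \<Rightarrow> real \<Rightarrow> real \<Rightarrow> config \<Rightarrow> bool" where
  "singular_point x2 x3 y3 K \<longleftrightarrow> on_CP_variety x2 x3 y3 K \<and>
     (\<exists>g1 g2 g3 g4 :: config.
        (GDERIV C_P K :> g1) \<and> (GDERIV (E_B x2) K :> g2) \<and>
        (GDERIV (F_1 x2 x3 y3) K :> g3) \<and> (GDERIV (F_2 x2 x3 y3) K :> g4) \<and>
        (\<exists>a1 a2 a3 a4 :: real. (a1, a2, a3, a4) \<noteq> (0, 0, 0, 0) \<and>
           a1 *\<^sub>R g1 + a2 *\<^sub>R g2 + a3 *\<^sub>R g3 + a4 *\<^sub>R g4 = 0))"

definition motion :: "real^2^2 \<Rightarrow> real^2 \<Rightarrow> config \<Rightarrow> config" where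
  "motion R t K = (\<chi> i. R *v (K $ i) + t)"

end

theory Submission
  imports Defs
begin

definition ee :: "6 \<Rightarrow> 2 \<Rightarrow> config" where "ee i j = axis i (axis j 1)"

lemma inner_ee[simp]: "inner h (ee i j) = h $ i $ j"
  by (simp add: ee_def inner_axis)

lemma gd_coord: "GDERIV (\<lambda>K::config. K $ i $ j) K :> ee i j"
  unfolding gderiv_def inner_ee
  by (intro bounded_linear.has_derivative[where f="\<lambda>K::config. K $ i $ j"]
      bounded_linear_compose[OF bounded_linear_vec_nth bounded_linear_vec_nth]
      has_derivative_ident)

lemma hd_cc[derivative_intros]: "((\<lambda>K. cc K i) has_derivative (\<lambda>h. cc h i)) (at K)"
  using gd_coord[of i 1 K] unfolding gderiv_def cc_def by simp
lemma hd_dd[derivative_intros]: "((\<lambda>K. dd K i) has_derivative (\<lambda>h. dd h i)) (at K)"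
  using gd_coord[of i 2 K] unfolding gderiv_def dd_def by simp

lemma CP_expand: "C_P K = cc K 5 * dd K 6 - cc K 6 * dd K 5 - cc K 4 * dd K 6 + cc K 6 * dd K 4
   + cc K 4 * dd K 5 - cc K 5 * dd K 4"
  unfolding C_P_def det_3 by (simp add: vector_def algebra_simps)

lemma norm2_sq: "(norm (v::real^2))\<^sup>2 = (v$1)\<^sup>2 + (v$2)\<^sup>2"
  unfolding power2_norm_eq_inner inner_vec_def sum_2 by (simp add: power2_eq_square)

lemma EB_expand: "E_B x2 K = (cc K 2 - cc K 1)\<^sup>2 + (dd K 2 - dd K 1)\<^sup>2 - x2\<^sup>2"
  unfolding E_B_def norm2_sq cc_def dd_def by simp

definition "GC K = (dd K 5 - dd K 6) *\<^sub>R ee 4 1 + (dd K 6 - dd K 4) *\<^sub>R ee 5 1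
  + (dd K 4 - dd K 5) *\<^sub>R ee 6 1 + (cc K 6 - cc K 5) *\<^sub>R ee 4 2
  + (cc K 4 - cc K 6) *\<^sub>R ee 5 2 + (cc K 5 - cc K 4) *\<^sub>R ee 6 2"
definition "GE K = (2*(cc K 2 - cc K 1)) *\<^sub>R ee 2 1 - (2*(cc K 2 - cc K 1)) *\<^sub>R ee 1 1
  + (2*(dd K 2 - dd K 1)) *\<^sub>R ee 2 2 - (2*(dd K 2 - dd K 1)) *\<^sub>R ee 1 2"
definition "GF1 x2 x3 y3 = (x2 - x3) *\<^sub>R ee 1 1 + y3 *\<^sub>R ee 1 2 + x3 *\<^sub>R ee 2 1
  - y3 *\<^sub>R ee 2 2 - x2 *\<^sub>R ee 3 1"
definition "GF2 x2 x3 y3 = (x2 - x3) *\<^sub>R ee 1 2 - y3 *\<^sub>R ee 1 1 + x3 *\<^sub>R ee 2 2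
  + y3 *\<^sub>R ee 2 1 - x2 *\<^sub>R ee 3 2"

lemmas inner_simps = inner_add_right inner_diff_right inner_scaleR_right inner_ee

lemma gC: "GDERIV C_P K :> GC K"
proof -
  have e: "C_P = (\<lambda>K. cc K 5 * dd K 6 - cc K 6 * dd K 5 - cc K 4 * dd K 6 + cc K 6 * dd K 4
   + cc K 4 * dd K 5 - cc K 5 * dd K 4)" by (rule ext, rule CP_expand)
  show ?thesis unfolding gderiv_def e
    by (rule derivative_eq_intros | simp)+
       (auto simp: GC_def inner_simps cc_def dd_def algebra_simps)
qed

lemma gE: "GDERIV (E_B x2) K :> GE K"
proof -
  have e: "E_B x2 = (\<lambda>K. (cc K 2 - cc K 1)\<^sup>2 + (dd K 2 - dd K 1)\<^sup>2 - x2\<^sup>2)"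
    by (rule ext, rule EB_expand)
  show ?thesis unfolding gderiv_def e
    by (rule derivative_eq_intros | simp)+
       (auto simp: GE_def inner_simps cc_def dd_def algebra_simps)
qed

lemma gF1: "GDERIV (F_1 x2 x3 y3) K :> GF1 x2 x3 y3"
  unfolding gderiv_def F_1_def[abs_def]
  by (rule derivative_eq_intros | simp)+
     (auto simp: GF1_def inner_simps cc_def dd_def algebra_simps)

lemma gF2: "GDERIV (F_2 x2 x3 y3) K :> GF2 x2 x3 y3"
  unfolding gderiv_def F_2_def[abs_def]
  by (rule derivative_eq_intros | simp)+
     (auto simp: GF2_def inner_simps cc_def dd_def algebra_simps)

lemma gderiv_uniq:
  assumes "GDERIV f K :> g" "GDERIV f K :> g'" shows "g = g'"
proof -
  have "(\<lambda>h. inner h g) = (\<lambda>h. inner h g')"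
    using assms unfolding gderiv_def by (rule has_derivative_unique)
  then have "inner (g - g') g = inner (g - g') g'" by metis
  then have "inner (g - g') (g - g') = 0" by (simp add: inner_diff_right)
  then show ?thesis by simp
qed

lemma vec2_eq: "(v::real^2) = w \<longleftrightarrow> v$1 = w$1 \<and> v$2 = w$2"
  by (simp add: vec_eq_iff forall_2)

lemma ee_ee: "inner (ee i j) (ee k l) = (if i = k \<and> j = l then 1 else 0)"
  by (simp only: inner_ee) (simp add: ee_def axis_def)

lemma sing_iff:
  assumes x2: "x2 \<noteq> 0" and on: "on_CP_variety x2 x3 y3 K"
  shows "singular_point x2 x3 y3 K \<longleftrightarrow> K $ 4 = K $ 5 \<and> K $ 5 = K $ 6"
proof
  assume "singular_point x2 x3 y3 K"
  then obtain g1 g2 g3 g4 a1 a2 a3 a4 where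
    d: "GDERIV C_P K :> g1" "GDERIV (E_B x2) K :> g2"
       "GDERIV (F_1 x2 x3 y3) K :> g3" "GDERIV (F_2 x2 x3 y3) K :> g4"
    and nz: "(a1, a2, a3, a4) \<noteq> (0, 0, 0, 0)"
    and s: "a1 *\<^sub>R g1 + a2 *\<^sub>R g2 + a3 *\<^sub>R g3 + a4 *\<^sub>R g4 = 0"
    unfolding singular_point_def by blast
  have g: "g1 = GC K" "g2 = GE K" "g3 = GF1 x2 x3 y3" "g4 = GF2 x2 x3 y3"
    using gderiv_uniq[OF d(1) gC] gderiv_uniq[OF d(2) gE] gderiv_uniq[OF d(3) gF1] gderiv_uniq[OF d(4) gF2] by auto
  have S: "\<And>i j. inner (ee i j) (a1 *\<^sub>R GC K + a2 *\<^sub>R GE K + a3 *\<^sub>R GF1 x2 x3 y3 + a4 *\<^sub>R GF2 x2 x3 y3) = 0"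
    using s g by simp
  note S' = S[unfolded inner_add_right inner_scaleR_right GC_def GE_def GF1_def GF2_def inner_diff_right ee_ee]
  have "a3 * x2 = 0" using S'[of 3 1] by simp
  hence a3: "a3 = 0" using x2 by simp
  have "a4 * x2 = 0" using S'[of 3 2] by simp
  hence a4: "a4 = 0" using x2 by simp
  have e1: "a2 * (cc K 2 - cc K 1) = 0" using S'[of 2 1] a3 a4 by simp
  have e2: "a2 * (dd K 2 - dd K 1) = 0" using S'[of 2 2] a3 a4 by simp
  have "(cc K 2 - cc K 1)\<^sup>2 + (dd K 2 - dd K 1)\<^sup>2 = x2\<^sup>2"
    using on unfolding on_CP_variety_def EB_expand by simp
  hence "cc K 2 - cc K 1 \<noteq> 0 \<or> dd K 2 - dd K 1 \<noteq> 0" using x2 by auto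
  hence a2: "a2 = 0" using e1 e2 by auto
  have a1: "a1 \<noteq> 0" using nz a2 a3 a4 by auto
  have "a1 * (dd K 5 - dd K 6) = 0" using S'[of 4 1] a2 a3 a4 by simp
  hence 1: "dd K 5 = dd K 6" using a1 by simp
  have "a1 * (dd K 6 - dd K 4) = 0" using S'[of 5 1] a2 a3 a4 by simp
  hence 2: "dd K 6 = dd K 4" using a1 by simp
  have "a1 * (cc K 6 - cc K 5) = 0" using S'[of 4 2] a2 a3 a4 by simp
  hence 3: "cc K 6 = cc K 5" using a1 by simp
  have "a1 * (cc K 4 - cc K 6) = 0" using S'[of 5 2] a2 a3 a4 by simp
  hence 4: "cc K 4 = cc K 6" using a1 by simp
  show "K $ 4 = K $ 5 \<and> K $ 5 = K $ 6"
    using 1 2 3 4 unfolding vec2_eq cc_def dd_def by simp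
next
  assume eq: "K $ 4 = K $ 5 \<and> K $ 5 = K $ 6"
  have "GC K = 0" unfolding GC_def cc_def dd_def using eq by simp
  then show "singular_point x2 x3 y3 K"
    unfolding singular_point_def using on gC[of K] gE[of x2 K] gF1[of x2 x3 y3 K] gF2[of x2 x3 y3 K]
    by (intro conjI exI[of _ "GC K"] exI[of _ "GE K"] exI[of _ "GF1 x2 x3 y3"] exI[of _ "GF2 x2 x3 y3"]
          exI[of _ 1] exI[of _ 0]) auto
qed

lemma rot_form:
  assumes "rotation_matrix (R::real^2^2)"
  shows "R$1$2 = -(R$2$1) \<and> R$2$2 = R$1$1 \<and> (R$1$1)\<^sup>2 + (R$2$1)\<^sup>2 = 1"
proof -
  have o: "transpose R ** R = mat 1" and d: "det R = 1"
    using assms unfolding rotation_matrix_def orthogonal_matrix_def by auto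
  have e: "(transpose R ** R) $ i $ j = (mat 1 :: real^2^2) $ i $ j" for i j using o by simp
  have 1: "R$1$1 * R$1$1 + R$2$1 * R$2$1 = 1" using e[of 1 1]
    by (simp add: matrix_matrix_mult_def sum_2 transpose_def mat_def)
  have 2: "R$1$2 * R$1$2 + R$2$2 * R$2$2 = 1" using e[of 2 2]
    by (simp add: matrix_matrix_mult_def sum_2 transpose_def mat_def)
  have 3: "R$1$1 * R$1$2 + R$2$1 * R$2$2 = 0" using e[of 1 2]
    by (simp add: matrix_matrix_mult_def sum_2 transpose_def mat_def)
  have 4: "R$1$1 * R$2$2 - R$1$2 * R$2$1 = 1" using d by (simp add: det_2)
  have "(R$2$2 - R$1$1)\<^sup>2 + (R$1$2 + R$2$1)\<^sup>2 = 0"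
    using 1 2 3 4 by (simp add: power2_eq_square algebra_simps)
  then have "R$2$2 - R$1$1 = 0 \<and> R$1$2 + R$2$1 = 0"
    by (simp add: add_nonneg_eq_0_iff)
  then show ?thesis using 1 by (auto simp: power2_eq_square)
qed

lemma motion_cd:
  "cc (motion R t K) i = R$1$1 * cc K i + R$1$2 * dd K i + t$1"
  "dd (motion R t K) i = R$2$1 * cc K i + R$2$2 * dd K i + t$2"
  by (simp_all add: motion_def cc_def dd_def matrix_vector_mult_def sum_2)

lemma motion_inv:
  assumes R: "rotation_matrix R"
  shows "on_CP_variety x2 x3 y3 (motion R t K) \<longleftrightarrow> on_CP_variety x2 x3 y3 K"
    and "(motion R t K $ 4 = motion R t K $ 5 \<and> motion R t K $ 5 = motion R t K $ 6)
         \<longleftrightarrow> (K $ 4 = K $ 5 \<and> K $ 5 = K $ 6)"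
proof -
  define a b where "a = R$1$1" and "b = R$2$1"
  have ab: "a\<^sup>2 + b\<^sup>2 = 1" and
    mc: "\<And>i. cc (motion R t K) i = a * cc K i - b * dd K i + t$1" and
    md: "\<And>i. dd (motion R t K) i = b * cc K i + a * dd K i + t$2"
    using rot_form[OF R] unfolding a_def b_def motion_cd by auto
  have C: "C_P (motion R t K) = (a\<^sup>2 + b\<^sup>2) * C_P K"
    unfolding CP_expand mc md by (simp add: power2_eq_square algebra_simps)
  have E: "E_B x2 (motion R t K) + x2\<^sup>2 = (a\<^sup>2 + b\<^sup>2) * (E_B x2 K + x2\<^sup>2)"
    unfolding EB_expand mc md by (simp add: power2_eq_square algebra_simps)
  have F1: "F_1 x2 x3 y3 (motion R t K) = a * F_1 x2 x3 y3 K - b * F_2 x2 x3 y3 K"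
    unfolding F_1_def F_2_def mc md by (simp add: algebra_simps)
  have F2: "F_2 x2 x3 y3 (motion R t K) = b * F_1 x2 x3 y3 K + a * F_2 x2 x3 y3 K"
    unfolding F_1_def F_2_def mc md by (simp add: algebra_simps)
  have inv: "(a * u - b * v = 0 \<and> b * u + a * v = 0) \<longleftrightarrow> (u = 0 \<and> v = 0)" for u v :: real
  proof
    assume h: "a * u - b * v = 0 \<and> b * u + a * v = 0"
    have "a * (a * u - b * v) + b * (b * u + a * v) = (a\<^sup>2 + b\<^sup>2) * u"
      "a * (b * u + a * v) - b * (a * u - b * v) = (a\<^sup>2 + b\<^sup>2) * v"
      by (simp_all add: power2_eq_square algebra_simps)
    then have "u = a * (a * u - b * v) + b * (b * u + a * v)" "v = a * (b * u + a * v) - b * (a * u - b * v)"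
      using ab by simp_all
    then show "u = 0 \<and> v = 0" using h by (metis add_0 diff_zero mult_zero_right)
  qed simp
  show "on_CP_variety x2 x3 y3 (motion R t K) \<longleftrightarrow> on_CP_variety x2 x3 y3 K"
    unfolding on_CP_variety_def C F1 F2 using E ab inv[of "F_1 x2 x3 y3 K" "F_2 x2 x3 y3 K"]
    by auto
  have eqm: "motion R t K $ i = motion R t K $ j \<longleftrightarrow> K $ i = K $ j" for i j
  proof -
    have "motion R t K $ i = motion R t K $ j \<longleftrightarrow>
       (a * (cc K i - cc K j) - b * (dd K i - dd K j) = 0 \<and> b * (cc K i - cc K j) + a * (dd K i - dd K j) = 0)"
      unfolding vec2_eq cc_def[symmetric] dd_def[symmetric] mc md
      by (simp add: right_diff_distrib) linarith
    also have "\<dots> \<longleftrightarrow> K $ i = K $ j" unfolding inv vec2_eq cc_def dd_def by simp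
    finally show ?thesis .
  qed
  show "(motion R t K $ 4 = motion R t K $ 5 \<and> motion R t K $ 5 = motion R t K $ 6)
         \<longleftrightarrow> (K $ 4 = K $ 5 \<and> K $ 5 = K $ 6)" using eqm by simp
qed

theorem theorem9:
  fixes x2 x3 y3 :: real
  assumes "x2 \<noteq> 0"
  shows "(\<forall>(R :: real^2^2) (t :: real^2) (K :: config). rotation_matrix R \<longrightarrow>
            (K \<in> {K. singular_point x2 x3 y3 K} \<longleftrightarrow>
             motion R t K \<in> {K. singular_point x2 x3 y3 K}))
       \<and> (\<forall>K :: config. on_CP_variety x2 x3 y3 K \<longrightarrow>
            (singular_point x2 x3 y3 K \<longleftrightarrow> K $ 4 = K $ 5 \<and> K $ 5 = K $ 6))"
proof (intro conjI allI impI)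
  fix R :: "real^2^2" and t :: "real^2" and K :: config
  assume R: "rotation_matrix R"
  have s: "singular_point x2 x3 y3 L \<longleftrightarrow> on_CP_variety x2 x3 y3 L \<and> L $ 4 = L $ 5 \<and> L $ 5 = L $ 6"
    for L using sing_iff[OF assms] singular_point_def by blast
  show "K \<in> {K. singular_point x2 x3 y3 K} \<longleftrightarrow> motion R t K \<in> {K. singular_point x2 x3 y3 K}"
    unfolding mem_Collect_eq s motion_inv[OF R] ..
next
  fix K assume "on_CP_variety x2 x3 y3 K"
  then show "singular_point x2 x3 y3 K \<longleftrightarrow> K $ 4 = K $ 5 \<and> K $ 5 = K $ 6"
    by (rule sing_iff[OF assms])
qed

end
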